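(* Let $M$ be a finite-horizon MDP with an offline dataset $\mathcal D$ and dataset-induced MDP $M_{\mathcal D}$, and let $\pi$ be batch-constrained with respect to $\mathcal D$. Suppose $\max_{(s,a):\rho_\pi^{M_{\mathcal D}}(s,a)>0}\|P^{M_{\mathcal D}}(\cdot\mid s,a)-P^M(\cdot\mid s,a)\|_1\le\epsilon_P$, $\max_{(s,a):\rho_\pi^{M_{\mathcal D}}(s,a)>0}|r^{M_{\mathcal D}}(s,a)-r^M(s,a)|\le\epsilon_r$, and $\max_{s,a}\max(r^{M_{\mathcal D}}(s,a),r^M(s,a))\le r_{max}$. Then $$|\mathcal J_{M_{\mathcal D}}(\pi)-\mathcal J_M(\pi)|\le H\epsilon_r+\frac{H(H-1)r_{max}}{2}\epsilon_P.$$
   Context: $M=(\mathcal S,\mathcal A,\mathcal R,H,P^M,R^M)$ is a finite-horizon MDP with finite spaces, fixed initial state $s_0$, state space partitioned into disjoint layers $\mathcal S_h$ ($h=0,\dots,H-1$) by timestep, rewards in $[0,1]$. $\mathcal J_M(\pi)$ is the expected total reward of policy $\pi$ over $H$ steps from $s_0$. Mean reward $r^M(s,a)=\mathbb E_{r\sim R^M(\cdot\mid s,a)}[r]$. Visitation distribution of $\pi$ in an MDP: $\rho_\pi(s_0)=1/H$, $\rho_\pi(s)=\sum_{\tilde s\in\mathcal S_{h-1},\tilde a}\rho_\pi(\tilde s)\pi(\tilde a\mid\tilde s)P(s\mid\tilde s,\tilde a)$ for $s\in\mathcal S_h$, $h>0$, and $\rho_\pi(s,a)=\rho_\pi(s)\pi(a\mid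 s)$. $\mathcal D$ is a set of trajectories in $M$; the dataset-induced MDP $M_{\mathcal D}$ has the same spaces and horizon with $P^{M_{\mathcal D}}(s'\mid s,a)=N(s,a,s')/N(s,a)$ and $R^{M_{\mathcal D}}(r\mid s,a)=N(s,a,r)/N(s,a)$ when $N(s,a)>0$ and $0$ otherwise ($N$ counts occurrences in $\mathcal D$). $\pi$ is batch-constrained if $\pi(a\mid s)=0$ whenever $(s,a)$ does not appear in $\mathcal D$. *)

theory Defs
  imports Complex_Main
begin

text \<open>A transition kernel is P s a s', a reward kernel is R s a r (probability of reward r),
  layer s is the timestep index h of the layer S_h containing s.\<close>

definition is_mdp ::
  "nat \<Rightarrow> ('s::finite \<Rightarrow> nat) \<Rightarrow> 's \<Rightarrow> real set \<Rightarrow>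
   ('s \<Rightarrow> 'a::finite \<Rightarrow> 's \<Rightarrow> real) \<Rightarrow> ('s \<Rightarrow> 'a \<Rightarrow> real \<Rightarrow> real) \<Rightarrow> bool" where
  "is_mdp H layer s0 Rw P R \<longleftrightarrow>
     0 < H \<and> layer s0 = 0 \<and> (\<forall>s. layer s < H) \<and>
     finite Rw \<and> Rw \<subseteq> {0..1} \<and>
     (\<forall>s a s'. 0 \<le> P s a s') \<and> (\<forall>s a. (\<Sum>s'\<in>UNIV. P s a s') = 1) \<and>
     (\<forall>s a s'. 0 < P s a s' \<and> layer s + 1 < H \<longrightarrow> layer s' = layer s + 1) \<and>
     (\<forall>s a r. 0 \<le> R s a r) \<and> (\<forall>s a r. r \<notin> Rw \<longrightarrow> R s a r = 0) \<and>
     (\<forall>s a. (\<Sum>r\<in>Rw. R s a r) = 1)"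

definition is_policy :: "('s::finite \<Rightarrow> 'a::finite \<Rightarrow> real) \<Rightarrow> bool" where
  "is_policy \<pi> \<longleftrightarrow> (\<forall>s a. 0 \<le> \<pi> s a) \<and> (\<forall>s. (\<Sum>a\<in>UNIV. \<pi> s a) = 1)"

definition mean_reward :: "real set \<Rightarrow> ('s \<Rightarrow> 'a \<Rightarrow> real \<Rightarrow> real) \<Rightarrow> 's \<Rightarrow> 'a \<Rightarrow> real" where
  "mean_reward Rw R s a = (\<Sum>r\<in>Rw. r * R s a r)"

fun value_fn :: "real set \<Rightarrow> ('s::finite \<Rightarrow> 'a::finite \<Rightarrow> 's \<Rightarrow> real) \<Rightarrow> ('s \<Rightarrow> 'a \<Rightarrow> real \<Rightarrow> real)
     \<Rightarrow> ('s \<Rightarrow> 'a \<Rightarrow> real) \<Rightarrow> nat \<Rightarrow> 's \<Rightarrow> real" where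
  "value_fn Rw P R \<pi> 0 s = 0"
| "value_fn Rw P R \<pi> (Suc n) s =
     (\<Sum>a\<in>UNIV. \<pi> s a * (mean_reward Rw R s a + (\<Sum>s'\<in>UNIV. P s a s' * value_fn Rw P R \<pi> n s')))"

definition J :: "nat \<Rightarrow> 's::finite \<Rightarrow> real set \<Rightarrow> ('s \<Rightarrow> 'a::finite \<Rightarrow> 's \<Rightarrow> real)
     \<Rightarrow> ('s \<Rightarrow> 'a \<Rightarrow> real \<Rightarrow> real) \<Rightarrow> ('s \<Rightarrow> 'a \<Rightarrow> real) \<Rightarrow> real" where
  "J H s0 Rw P R \<pi> = value_fn Rw P R \<pi> H s0"

fun rho_layer :: "nat \<Rightarrow> ('s::finite \<Rightarrow> nat) \<Rightarrow> 's \<Rightarrow> ('s \<Rightarrow> 'a::finite \<Rightarrow> 's \<Rightarrow> real)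
     \<Rightarrow> ('s \<Rightarrow> 'a \<Rightarrow> real) \<Rightarrow> nat \<Rightarrow> 's \<Rightarrow> real" where
  "rho_layer H layer s0 P \<pi> 0 s = (if s = s0 then 1 / real H else 0)"
| "rho_layer H layer s0 P \<pi> (Suc h) s =
     (\<Sum>t\<in>{t. layer t = h}. \<Sum>b\<in>UNIV. rho_layer H layer s0 P \<pi> h t * \<pi> t b * P t b s)"

definition rho :: "nat \<Rightarrow> ('s::finite \<Rightarrow> nat) \<Rightarrow> 's \<Rightarrow> ('s \<Rightarrow> 'a::finite \<Rightarrow> 's \<Rightarrow> real)
     \<Rightarrow> ('s \<Rightarrow> 'a \<Rightarrow> real) \<Rightarrow> 's \<Rightarrow> real" where
  "rho H layer s0 P \<pi> s = rho_layer H layer s0 P \<pi> (layer s) s"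

definition rho_sa :: "nat \<Rightarrow> ('s::finite \<Rightarrow> nat) \<Rightarrow> 's \<Rightarrow> ('s \<Rightarrow> 'a::finite \<Rightarrow> 's \<Rightarrow> real)
     \<Rightarrow> ('s \<Rightarrow> 'a \<Rightarrow> real) \<Rightarrow> 's \<Rightarrow> 'a \<Rightarrow> real" where
  "rho_sa H layer s0 P \<pi> s a = rho H layer s0 P \<pi> s * \<pi> s a"

type_synonym ('s, 'a) traj = "('s \<times> 'a \<times> real \<times> 's) list"

definition traj_in_mdp :: "('s \<Rightarrow> 'a \<Rightarrow> 's \<Rightarrow> real) \<Rightarrow> ('s \<Rightarrow> 'a \<Rightarrow> real \<Rightarrow> real)
     \<Rightarrow> ('s, 'a) traj \<Rightarrow> bool" where
  "traj_in_mdp P R \<tau> \<longleftrightarrow>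
     (\<forall>(s, a, r, s') \<in> set \<tau>. 0 < P s a s' \<and> 0 < R s a r) \<and>
     (\<forall>i. Suc i < length \<tau> \<longrightarrow> fst (\<tau> ! Suc i) = snd (snd (snd (\<tau> ! i))))"

definition N_sa :: "('s, 'a) traj list \<Rightarrow> 's \<Rightarrow> 'a \<Rightarrow> nat" where
  "N_sa D s a = sum_list (map (\<lambda>\<tau>. length (filter (\<lambda>(s1, a1, r1, t1). s1 = s \<and> a1 = a) \<tau>)) D)"

definition N_sas :: "('s, 'a) traj list \<Rightarrow> 's \<Rightarrow> 'a \<Rightarrow> 's \<Rightarrow> nat" where
  "N_sas D s a s' = sum_list (map (\<lambda>\<tau>. length (filter (\<lambda>(s1, a1, r1, t1). s1 = s \<and> a1 = a \<and> t1 = s') \<tau>)) D)"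

definition N_sar :: "('s, 'a) traj list \<Rightarrow> 's \<Rightarrow> 'a \<Rightarrow> real \<Rightarrow> nat" where
  "N_sar D s a r = sum_list (map (\<lambda>\<tau>. length (filter (\<lambda>(s1, a1, r1, t1). s1 = s \<and> a1 = a \<and> r1 = r) \<tau>)) D)"

definition P_data :: "('s, 'a) traj list \<Rightarrow> 's \<Rightarrow> 'a \<Rightarrow> 's \<Rightarrow> real" where
  "P_data D s a s' = (if N_sa D s a > 0 then real (N_sas D s a s') / real (N_sa D s a) else 0)"

definition R_data :: "('s, 'a) traj list \<Rightarrow> 's \<Rightarrow> 'a \<Rightarrow> real \<Rightarrow> real" where
  "R_data D s a r = (if N_sa D s a > 0 then real (N_sar D s a r) / real (N_sa D s a) else 0)"

definition batch_constrained :: "('s, 'a) traj list \<Rightarrow> ('s \<Rightarrow> 'a \<Rightarrow> real) \<Rightarrow> bool" where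
  "batch_constrained D \<pi> \<longleftrightarrow>
     (\<forall>s a. (\<not> (\<exists>\<tau>\<in>set D. \<exists>(s1, a1, r1, t1)\<in>set \<tau>. s1 = s \<and> a1 = a)) \<longrightarrow> \<pi> s a = 0)"

end

theory Submission
  imports Defs
begin


fun dvis :: "('s::finite \<Rightarrow> 'a::finite \<Rightarrow> 's \<Rightarrow> real) \<Rightarrow> ('s \<Rightarrow> 'a \<Rightarrow> real) \<Rightarrow> 's \<Rightarrow> nat \<Rightarrow> 's \<Rightarrow> real" where
  "dvis Q \<pi> s0 0 s = (if s = s0 then 1 else 0)"
| "dvis Q \<pi> s0 (Suc h) s = (\<Sum>t\<in>UNIV. \<Sum>b\<in>UNIV. dvis Q \<pi> s0 h t * \<pi> t b * Q t b s)"

lemma filter_count_sum: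
  "(\<Sum>y\<in>(UNIV::'b::finite set). length (filter (\<lambda>x. Q x \<and> f x = y) xs)) = length (filter Q xs)"
proof (induction xs)
  case Nil
  then show ?case by simp
next
  case (Cons x xs)
  have "(\<Sum>y\<in>(UNIV::'b set). length (filter (\<lambda>x. Q x \<and> f x = y) (x # xs)))
      = (\<Sum>y\<in>(UNIV::'b set). (if Q x \<and> f x = y then 1 else 0) + length (filter (\<lambda>x. Q x \<and> f x = y) xs))"
    by (intro sum.cong) auto
  also have "\<dots> = (\<Sum>y\<in>(UNIV::'b set). (if Q x \<and> f x = y then 1 else 0)) + length (filter Q xs)"
    by (simp add: sum.distrib Cons.IH)
  also have "(\<Sum>y\<in>(UNIV::'b set). (if Q x \<and> f x = y then 1 else (0::nat))) = (if Q x then 1 else 0)"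
    by (cases "Q x") (simp_all add: sum.delta)
  finally show ?case by simp
qed

lemma N_sas_sum: "(\<Sum>s'\<in>UNIV. N_sas D (s::'s::finite) a s') = N_sa D s a"
proof (induction D)
  case Nil
  then show ?case by (simp add: N_sas_def N_sa_def)
next
  case (Cons \<tau> D)
  have eq: "\<And>s'. filter (\<lambda>(s1, a1, r1, t1). s1 = s \<and> a1 = a \<and> t1 = s') \<tau> =
      filter (\<lambda>x. (case x of (s1, a1, r1, t1) \<Rightarrow> s1 = s \<and> a1 = a) \<and> snd (snd (snd x)) = s') \<tau>"
    by (intro filter_cong) auto
  have "(\<Sum>s'\<in>UNIV. N_sas (\<tau> # D) s a s') =
     (\<Sum>s'\<in>UNIV. length (filter (\<lambda>x. (case x of (s1, a1, r1, t1) \<Rightarrow> s1 = s \<and> a1 = a) \<and> snd (snd (snd x)) = s') \<tau>)) + (\<Sum>s'\<in>UNIV. N_sas D s a s')"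
    unfolding sum.distrib[symmetric] by (intro sum.cong refl) (simp only: N_sas_def list.map sum_list.Cons eq)
  also have "\<dots> = N_sa (\<tau> # D) s a"
    using filter_count_sum[of "\<lambda>x. case x of (s1, a1, r1, t1) \<Rightarrow> s1 = s \<and> a1 = a" "\<lambda>x. snd (snd (snd x))" \<tau>]
    by (simp add: Cons.IH N_sa_def)
  finally show ?case .
qed

lemma P_data_nonneg: "0 \<le> P_data D s a s'"
  by (simp add: P_data_def)

lemma P_data_sum: "(\<Sum>s'\<in>UNIV. P_data D (s::'s::finite) a s') \<le> 1"
proof (cases "N_sa D s a > 0")
  case True
  have "(\<Sum>s'\<in>UNIV. P_data D s a s') = (\<Sum>s'\<in>UNIV. real (N_sas D s a s')) / real (N_sa D s a)"
    using True by (simp add: P_data_def sum_divide_distrib)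
  also have "(\<Sum>s'\<in>UNIV. real (N_sas D s a s')) = real (N_sa D s a)"
    by (metis of_nat_sum N_sas_sum)
  finally show ?thesis using True by simp
next
  case False
  then show ?thesis by (simp add: P_data_def)
qed

lemma sum_list_nz: "sum_list (map (f::'x \<Rightarrow> nat) xs) \<noteq> 0 \<Longrightarrow> \<exists>x\<in>set xs. f x \<noteq> 0"
  by (induction xs) auto

lemma P_data_support:
  assumes "P_data D t b s \<noteq> 0"
  shows "\<exists>\<tau>\<in>set D. \<exists>r. (t, b, r, s) \<in> set \<tau>"
proof -
  from assms have "N_sas D t b s \<noteq> 0" by (simp add: P_data_def split: if_splits)
  then obtain \<tau> where "\<tau> \<in> set D" and
    "length (filter (\<lambda>(s1, a1, r1, t1). s1 = t \<and> a1 = b \<and> t1 = s) \<tau>) \<noteq> 0"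
    unfolding N_sas_def using sum_list_nz by blast
  then obtain x where "x \<in> set \<tau>" "(\<lambda>(s1, a1, r1, t1). s1 = t \<and> a1 = b \<and> t1 = s) x"
    by (metis (no_types, lifting) filter_False length_0_conv)
  then obtain r where "(t, b, r, s) \<in> set \<tau>" by (cases x) auto
  then show ?thesis using \<open>\<tau> \<in> set D\<close> by blast
qed

lemma dvis_nonneg:
  assumes "\<forall>s a s'. 0 \<le> Q s a s'" "\<forall>s a. 0 \<le> \<pi> s a"
  shows "0 \<le> dvis Q \<pi> s0 h s"
  using assms by (induction h arbitrary: s) (auto intro!: sum_nonneg)

lemma dvis_flow:
  "(\<Sum>s\<in>UNIV. dvis Q \<pi> s0 h s * (\<Sum>a\<in>UNIV. \<pi> s a * (\<Sum>s'\<in>UNIV. Q s a s' * f s')))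
   = (\<Sum>s'\<in>UNIV. dvis Q \<pi> s0 (Suc h) s' * f s')"
proof -
  have "(\<Sum>s\<in>UNIV. dvis Q \<pi> s0 h s * (\<Sum>a\<in>UNIV. \<pi> s a * (\<Sum>s'\<in>UNIV. Q s a s' * f s')))
     = (\<Sum>s\<in>UNIV. \<Sum>a\<in>UNIV. \<Sum>s'\<in>UNIV. dvis Q \<pi> s0 h s * \<pi> s a * Q s a s' * f s')"
    by (simp add: sum_distrib_left mult.assoc)
  also have "\<dots> = (\<Sum>s'\<in>UNIV. \<Sum>s\<in>UNIV. \<Sum>a\<in>UNIV. dvis Q \<pi> s0 h s * \<pi> s a * Q s a s' * f s')"
  proof -
    have "(\<Sum>s\<in>UNIV. \<Sum>a\<in>UNIV. \<Sum>s'\<in>UNIV. dvis Q \<pi> s0 h s * \<pi> s a * Q s a s' * f s')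
        = (\<Sum>s\<in>UNIV. \<Sum>s'\<in>UNIV. \<Sum>a\<in>UNIV. dvis Q \<pi> s0 h s * \<pi> s a * Q s a s' * f s')"
      by (rule sum.cong[OF refl], rule sum.swap)
    also have "\<dots> = (\<Sum>s'\<in>UNIV. \<Sum>s\<in>UNIV. \<Sum>a\<in>UNIV. dvis Q \<pi> s0 h s * \<pi> s a * Q s a s' * f s')"
      by (rule sum.swap)
    finally show ?thesis .
  qed
  also have "\<dots> = (\<Sum>s'\<in>UNIV. dvis Q \<pi> s0 (Suc h) s' * f s')"
    by (simp add: sum_distrib_right)
  finally show ?thesis .
qed

lemma dvis_mass:
  assumes "\<forall>s a s'. 0 \<le> Q s a s'" "\<forall>s a. 0 \<le> \<pi> s a" "\<forall>s. (\<Sum>a\<in>UNIV. \<pi> s a) = 1"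
    "\<forall>s a. (\<Sum>s'\<in>UNIV. Q s a s') \<le> 1"
  shows "(\<Sum>s\<in>UNIV. dvis Q \<pi> s0 h s) \<le> 1"
proof (induction h)
  case 0
  then show ?case by simp
next
  case (Suc h)
  have "(\<Sum>s\<in>UNIV. dvis Q \<pi> s0 (Suc h) s) = (\<Sum>s\<in>UNIV. dvis Q \<pi> s0 h s * (\<Sum>a\<in>UNIV. \<pi> s a * (\<Sum>s'\<in>UNIV. Q s a s' * 1)))"
    using dvis_flow[of Q \<pi> s0 h "\<lambda>_. 1"] by simp
  also have "\<dots> \<le> (\<Sum>s\<in>UNIV. dvis Q \<pi> s0 h s * (\<Sum>a\<in>UNIV. \<pi> s a * 1))"
    using assms dvis_nonneg[of Q \<pi> s0 h]
    by (intro sum_mono mult_left_mono mult_right_mono) auto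
  also have "\<dots> = (\<Sum>s\<in>UNIV. dvis Q \<pi> s0 h s)" using assms by simp
  finally show ?case using Suc by simp
qed


lemma dvis_layer:
  assumes l0: "layer s0 = 0"
    and supp: "\<forall>t b s. Q t b s \<noteq> 0 \<and> layer t + 1 < H \<longrightarrow> layer s = layer t + 1"
  shows "h < H \<Longrightarrow> (\<forall>s. rho_layer H layer s0 Q \<pi> h s = dvis Q \<pi> s0 h s / real H) \<and>
            (\<forall>s. dvis Q \<pi> s0 h s \<noteq> 0 \<longrightarrow> layer s = h)"
proof (induction h)
  case 0
  then show ?case using l0 by auto
next
  case (Suc h)
  then have IH1: "\<And>s. rho_layer H layer s0 Q \<pi> h s = dvis Q \<pi> s0 h s / real H"
    and IH2: "\<And>s. dvis Q \<pi> s0 h s \<noteq> 0 \<Longrightarrow> layer s = h" by auto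
  have A: "rho_layer H layer s0 Q \<pi> (Suc h) s = dvis Q \<pi> s0 (Suc h) s / real H" for s
  proof -
    have "rho_layer H layer s0 Q \<pi> (Suc h) s =
        (\<Sum>t\<in>{t. layer t = h}. \<Sum>b\<in>UNIV. dvis Q \<pi> s0 h t * \<pi> t b * Q t b s / real H)"
      by (simp only: rho_layer.simps IH1 times_divide_eq_left)
    also have "\<dots> = (\<Sum>t\<in>UNIV. \<Sum>b\<in>UNIV. dvis Q \<pi> s0 h t * \<pi> t b * Q t b s / real H)"
    proof -
      have z: "layer t \<noteq> h \<Longrightarrow> dvis Q \<pi> s0 h t = 0" for t using IH2 by blast
      have "\<forall>t\<in>UNIV - {t. layer t = h}. (\<Sum>b\<in>UNIV. dvis Q \<pi> s0 h t * \<pi> t b * Q t b s / real H) = 0"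
        using z by simp
      then show ?thesis by (intro sum.mono_neutral_left) simp_all
    qed
    also have "\<dots> = dvis Q \<pi> s0 (Suc h) s / real H"
      by (simp add: sum_divide_distrib)
    finally show ?thesis .
  qed
  have B: "layer s = Suc h" if nz: "dvis Q \<pi> s0 (Suc h) s \<noteq> 0" for s
  proof -
    have nz': "(\<Sum>t\<in>UNIV. \<Sum>b\<in>UNIV. dvis Q \<pi> s0 h t * \<pi> t b * Q t b s) \<noteq> 0"
      using nz by simp
    have "\<exists>t. (\<Sum>b\<in>UNIV. dvis Q \<pi> s0 h t * \<pi> t b * Q t b s) \<noteq> 0"
    proof (rule ccontr)
      assume "\<not> ?thesis"
      then have "\<And>t. (\<Sum>b\<in>UNIV. dvis Q \<pi> s0 h t * \<pi> t b * Q t b s) = 0" by blast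
      then show False using nz' by simp
    qed
    then obtain t where t: "(\<Sum>b\<in>UNIV. dvis Q \<pi> s0 h t * \<pi> t b * Q t b s) \<noteq> 0" by blast
    have "\<exists>b. dvis Q \<pi> s0 h t * \<pi> t b * Q t b s \<noteq> 0"
    proof (rule ccontr)
      assume "\<not> ?thesis"
      then have "\<And>b. dvis Q \<pi> s0 h t * \<pi> t b * Q t b s = 0" by blast
      then have "(\<Sum>b\<in>UNIV. dvis Q \<pi> s0 h t * \<pi> t b * Q t b s) = 0" by (intro sum.neutral) blast
      then show False using t by simp
    qed
    then obtain b where "dvis Q \<pi> s0 h t * \<pi> t b * Q t b s \<noteq> 0" by blast
    then have "dvis Q \<pi> s0 h t \<noteq> 0" "Q t b s \<noteq> 0" by auto
    then have "layer t = h" "Q t b s \<noteq> 0" using IH2 by auto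
    moreover have "layer t + 1 < H" using Suc.prems \<open>layer t = h\<close> by simp
    ultimately have "layer s = layer t + 1" by (intro supp[rule_format] conjI)
    then show ?thesis using \<open>layer t = h\<close> by simp
  qed
  show ?case using A B by blast
qed

lemma value_bound:
  assumes "\<forall>s a s'. 0 \<le> P s a s'" "\<forall>s a. (\<Sum>s'\<in>UNIV. P s a s') = 1"
    "\<forall>s a. 0 \<le> \<pi> s a" "\<forall>s. (\<Sum>a\<in>UNIV. \<pi> s a) = 1"
    "\<forall>s a. 0 \<le> mean_reward Rw R s a" "\<forall>s a. mean_reward Rw R s a \<le> rmax"
  shows "0 \<le> value_fn Rw P R \<pi> n s \<and> value_fn Rw P R \<pi> n s \<le> real n * rmax"
proof (induction n arbitrary: s)
  case 0
  then show ?case by simp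
next
  case (Suc n)
  have lo: "0 \<le> value_fn Rw P R \<pi> (Suc n) s"
    unfolding value_fn.simps
  proof (intro sum_nonneg mult_nonneg_nonneg add_nonneg_nonneg)
    fix a s' show "0 \<le> \<pi> s a" using assms(3) by blast
    show "0 \<le> mean_reward Rw R s a" using assms(5) by blast
    show "0 \<le> P s a s'" using assms(1) by blast
    show "0 \<le> value_fn Rw P R \<pi> n s'" using Suc.IH by blast
  qed
  have "value_fn Rw P R \<pi> (Suc n) s \<le>
      (\<Sum>a\<in>UNIV. \<pi> s a * (rmax + (\<Sum>s'\<in>UNIV. P s a s' * (real n * rmax))))"
    unfolding value_fn.simps
  proof (intro sum_mono mult_left_mono add_mono)
    fix a s' show "0 \<le> \<pi> s a" using assms(3) by blast
    show "mean_reward Rw R s a \<le> rmax" using assms(6) by blast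
    show "0 \<le> P s a s'" using assms(1) by blast
    show "value_fn Rw P R \<pi> n s' \<le> real n * rmax" using Suc.IH by blast
  qed
  also have "\<dots> = (\<Sum>a\<in>UNIV. \<pi> s a * (rmax + real n * rmax))"
  proof (rule sum.cong[OF refl])
    fix a
    have "(\<Sum>s'\<in>UNIV. P s a s' * (real n * rmax)) = (\<Sum>s'\<in>UNIV. P s a s') * (real n * rmax)"
      by (rule sum_distrib_right[symmetric])
    moreover have "(\<Sum>s'\<in>UNIV. P s a s') = 1" using assms(2) by blast
    ultimately show "\<pi> s a * (rmax + (\<Sum>s'\<in>UNIV. P s a s' * (real n * rmax))) = \<pi> s a * (rmax + real n * rmax)"
      by (simp only: mult_1_left)
  qed
  also have "\<dots> = (\<Sum>a\<in>UNIV. \<pi> s a) * (rmax + real n * rmax)"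
    by (rule sum_distrib_right[symmetric])
  also have "\<dots> = real (Suc n) * rmax"
  proof -
    have "(\<Sum>a\<in>UNIV. \<pi> s a) = 1" using assms(4) by blast
    moreover have "real (Suc n) * rmax = rmax + real n * rmax" by (simp add: algebra_simps)
    ultimately show ?thesis by (simp only: mult_1)
  qed
  finally have "value_fn Rw P R \<pi> (Suc n) s \<le> real (Suc n) * rmax" .
  then show ?case using lo by blast
qed



lemma diff_split_sum:
  fixes Q P A B :: "'s::finite \<Rightarrow> real"
  shows "(\<Sum>s'\<in>UNIV. Q s' * A s') - (\<Sum>s'\<in>UNIV. P s' * B s') =
         (\<Sum>s'\<in>UNIV. (Q s' - P s') * B s') + (\<Sum>s'\<in>UNIV. Q s' * (A s' - B s'))"
  by (simp add: left_diff_distrib right_diff_distrib sum_subtractf)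

lemma abs_sum_weighted:
  fixes w v :: "'s::finite \<Rightarrow> real"
  assumes "\<And>s. \<bar>v s\<bar> \<le> c" "0 \<le> c"
  shows "\<bar>\<Sum>s\<in>UNIV. w s * v s\<bar> \<le> (\<Sum>s\<in>UNIV. \<bar>w s\<bar>) * c"
proof -
  have "\<bar>\<Sum>s\<in>UNIV. w s * v s\<bar> \<le> (\<Sum>s\<in>UNIV. \<bar>w s * v s\<bar>)" by (rule sum_abs)
  also have "\<dots> \<le> (\<Sum>s\<in>UNIV. \<bar>w s\<bar> * c)"
  proof (rule sum_mono)
    fix s show "\<bar>w s * v s\<bar> \<le> \<bar>w s\<bar> * c"
      using assms(1)[of s] by (simp add: abs_mult mult_left_mono)
  qed
  also have "\<dots> = (\<Sum>s\<in>UNIV. \<bar>w s\<bar>) * c" by (rule sum_distrib_right[symmetric])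
  finally show ?thesis .
qed

lemma abs_sum_weighted2:
  fixes w v :: "'s::finite \<Rightarrow> real"
  assumes "\<And>s. 0 \<le> w s" "\<And>s. w s \<noteq> 0 \<Longrightarrow> \<bar>v s\<bar> \<le> c"
  shows "\<bar>\<Sum>s\<in>UNIV. w s * v s\<bar> \<le> (\<Sum>s\<in>UNIV. w s) * c"
proof -
  have "\<bar>\<Sum>s\<in>UNIV. w s * v s\<bar> \<le> (\<Sum>s\<in>UNIV. \<bar>w s * v s\<bar>)" by (rule sum_abs)
  also have "\<dots> \<le> (\<Sum>s\<in>UNIV. w s * c)"
  proof (rule sum_mono)
    fix s show "\<bar>w s * v s\<bar> \<le> w s * c"
    proof (cases "w s = 0")
      case True then show ?thesis by simp
    next
      case False
      then have "\<bar>v s\<bar> \<le> c" by (rule assms(2))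
      then show ?thesis using assms(1)[of s] by (simp add: abs_mult mult_left_mono)
    qed
  qed
  also have "\<dots> = (\<Sum>s\<in>UNIV. w s) * c" by (rule sum_distrib_right[symmetric])
  finally show ?thesis .
qed

theorem lemma2:
  fixes H :: nat and layer :: "'s::finite \<Rightarrow> nat" and s0 :: 's and Rw :: "real set"
    and P :: "'s \<Rightarrow> 'a::finite \<Rightarrow> 's \<Rightarrow> real" and R :: "'s \<Rightarrow> 'a \<Rightarrow> real \<Rightarrow> real"
    and D :: "('s, 'a) traj list" and \<pi> :: "'s \<Rightarrow> 'a \<Rightarrow> real"
    and eps_P eps_r r_max :: real
  assumes mdp: "is_mdp H layer s0 Rw P R"
    and data: "\<forall>\<tau>\<in>set D. traj_in_mdp P R \<tau>"
    and pol: "is_policy \<pi>"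
    and bc: "batch_constrained D \<pi>"
    and hP: "\<forall>s a. rho_sa H layer s0 (P_data D) \<pi> s a > 0 \<longrightarrow>
               (\<Sum>s'\<in>UNIV. \<bar>P_data D s a s' - P s a s'\<bar>) \<le> eps_P"
    and hr: "\<forall>s a. rho_sa H layer s0 (P_data D) \<pi> s a > 0 \<longrightarrow>
               \<bar>mean_reward Rw (R_data D) s a - mean_reward Rw R s a\<bar> \<le> eps_r"
    and hmax: "\<forall>s a. max (mean_reward Rw (R_data D) s a) (mean_reward Rw R s a) \<le> r_max"
  shows "\<bar>J H s0 Rw (P_data D) (R_data D) \<pi> - J H s0 Rw P R \<pi>\<bar>
           \<le> real H * eps_r + real H * (real H - 1) * r_max / 2 * eps_P"
proof -
  note m = mdp[unfolded is_mdp_def]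
  have H0: "0 < H" using m by blast
  have l0: "layer s0 = 0" using m by blast
  have Rw01: "Rw \<subseteq> {0..1}" using m by blast
  have Pnn: "\<forall>s a s'. 0 \<le> P s a s'" using m by blast
  have Psum: "\<forall>s a. (\<Sum>s'\<in>UNIV. P s a s') = 1" using m by blast
  have Play: "\<forall>s a s'. 0 < P s a s' \<and> layer s + 1 < H \<longrightarrow> layer s' = layer s + 1" using m by blast
  have Rnn: "\<forall>s a r. 0 \<le> R s a r" using m by blast
  have pinn: "\<forall>s a. 0 \<le> \<pi> s a" using pol unfolding is_policy_def by blast
  have pisum: "\<forall>s. (\<Sum>a\<in>UNIV. \<pi> s a) = 1" using pol unfolding is_policy_def by blast
  have Qnn: "\<forall>s a s'. 0 \<le> P_data D s a s'" by (intro allI) (rule P_data_nonneg)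
  have Qsum: "\<forall>s a. (\<Sum>s'\<in>UNIV. P_data D s a s') \<le> 1" by (intro allI) (rule P_data_sum)
  have Qsupp: "\<forall>t b s. P_data D t b s \<noteq> 0 \<and> layer t + 1 < H \<longrightarrow> layer s = layer t + 1"
  proof (intro allI impI)
    fix t b s assume a: "P_data D t b s \<noteq> 0 \<and> layer t + 1 < H"
    then obtain \<tau> r where \<tau>: "\<tau> \<in> set D" "(t, b, r, s) \<in> set \<tau>"
      using P_data_support[of D t b s] a by blast
    have "\<forall>(s1, a1, r1, t1)\<in>set \<tau>. 0 < P s1 a1 t1 \<and> 0 < R s1 a1 r1"
      using data \<tau>(1) unfolding traj_in_mdp_def by blast
    then have "0 < P t b s" using \<tau>(2) by fastforce
    then show "layer s = layer t + 1" using Play a by blast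
  qed
  define d where "d = dvis (P_data D) \<pi> s0"
  define VD where "VD = value_fn Rw (P_data D) (R_data D) \<pi>"
  define VM where "VM = value_fn Rw P R \<pi>"
  define rD where "rD = mean_reward Rw (R_data D)"
  define rM where "rM = mean_reward Rw R"
  have lay: "\<And>h s. h < H \<Longrightarrow> rho_layer H layer s0 (P_data D) \<pi> h s = d h s / real H"
    "\<And>h s. h < H \<Longrightarrow> d h s \<noteq> 0 \<Longrightarrow> layer s = h"
    using dvis_layer[OF l0 Qsupp] unfolding d_def by blast+
  have dnn: "\<And>h s. 0 \<le> d h s" unfolding d_def using dvis_nonneg Qnn pinn by blast
  have dmass: "\<And>h. (\<Sum>s\<in>UNIV. d h s) \<le> 1" unfolding d_def using dvis_mass Qnn pinn pisum Qsum by blast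
  have rMnn: "0 \<le> rM s a" for s a
    unfolding rM_def mean_reward_def
  proof (rule sum_nonneg)
    fix r assume "r \<in> Rw" then have "0 \<le> r" using Rw01 by auto
    then show "0 \<le> r * R s a r" using Rnn by simp
  qed
  have rMle: "rM s a \<le> r_max" for s a using hmax unfolding rM_def by simp
  have rmax_nn: "0 \<le> r_max" using rMnn rMle by (meson order_trans)
  have Vb: "0 \<le> VM n s \<and> VM n s \<le> real n * r_max" for n s
    unfolding VM_def using value_bound[of P \<pi> Rw R r_max n s] Pnn Psum pinn pisum rMnn rMle
    unfolding rM_def by blast
  have visit: "0 < rho_sa H layer s0 (P_data D) \<pi> s a" if "h < H" "0 < d h s" "0 < \<pi> s a" for h s a
  proof -
    have ls: "layer s = h" using lay(2)[OF that(1)] that(2) by simp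
    have "rho H layer s0 (P_data D) \<pi> s = d h s / real H"
      unfolding rho_def ls using lay(1)[OF that(1)] by simp
    then show ?thesis unfolding rho_sa_def using that H0 by simp
  qed
  obtain a0 where a0: "0 < \<pi> s0 a0"
  proof -
    have "\<exists>a. \<pi> s0 a \<noteq> 0"
    proof (rule ccontr)
      assume "\<not> ?thesis"
      then have "(\<Sum>a\<in>UNIV. \<pi> s0 a) = 0" by simp
      then show False using pisum by simp
    qed
    then obtain a where "\<pi> s0 a \<noteq> 0" by blast
    moreover have "0 \<le> \<pi> s0 a" using pinn by blast
    ultimately have "0 < \<pi> s0 a" by linarith
    then show ?thesis using that by blast
  qed
  have v0: "0 < rho_sa H layer s0 (P_data D) \<pi> s0 a0"
    using visit[of 0 s0 a0] H0 a0 unfolding d_def by simp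
  have epsr_nn: "0 \<le> eps_r" using hr v0 by (meson abs_ge_zero order_trans)
  have epsP_nn: "0 \<le> eps_P"
  proof -
    have "0 \<le> (\<Sum>s'\<in>UNIV. \<bar>P_data D s0 a0 s' - P s0 a0 s'\<bar>)" by (simp add: sum_nonneg)
    then show ?thesis using hP v0 by (meson order_trans)
  qed
  define C where "C n = real n * eps_r + real n * (real n - 1) * r_max / 2 * eps_P" for n :: nat
  have key: "\<forall>h. h + n \<le> H \<longrightarrow> \<bar>\<Sum>s\<in>UNIV. d h s * (VD n s - VM n s)\<bar> \<le> C n" for n
  proof (induction n)
    case 0
    then show ?case by (simp add: VD_def VM_def C_def)
  next
    case (Suc n)
    show ?case
    proof (intro allI impI)
      fix h assume hn: "h + Suc n \<le> H"
      then have hH: "h < H" by simp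
      define K where "K = eps_r + real n * r_max * eps_P"
      define x where "x s a = rD s a - rM s a + (\<Sum>s'\<in>UNIV. (P_data D s a s' - P s a s') * VM n s')" for s a
      have dec: "VD (Suc n) s - VM (Suc n) s = (\<Sum>a\<in>UNIV. \<pi> s a * x s a) +
          (\<Sum>a\<in>UNIV. \<pi> s a * (\<Sum>s'\<in>UNIV. P_data D s a s' * (VD n s' - VM n s')))" for s
      proof -
        have "VD (Suc n) s - VM (Suc n) s = (\<Sum>a\<in>UNIV. \<pi> s a * (rD s a + (\<Sum>s'\<in>UNIV. P_data D s a s' * VD n s'))
            - \<pi> s a * (rM s a + (\<Sum>s'\<in>UNIV. P s a s' * VM n s')))"
          unfolding VD_def VM_def rD_def rM_def value_fn.simps by (rule sum_subtractf[symmetric])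
        also have "\<dots> = (\<Sum>a\<in>UNIV. \<pi> s a * x s a +
            \<pi> s a * (\<Sum>s'\<in>UNIV. P_data D s a s' * (VD n s' - VM n s')))"
        proof (rule sum.cong[OF refl])
          fix a
          have "(\<Sum>s'\<in>UNIV. P_data D s a s' * VD n s') - (\<Sum>s'\<in>UNIV. P s a s' * VM n s') =
             (\<Sum>s'\<in>UNIV. (P_data D s a s' - P s a s') * VM n s') + (\<Sum>s'\<in>UNIV. P_data D s a s' * (VD n s' - VM n s'))"
            by (rule diff_split_sum)
          then show "\<pi> s a * (rD s a + (\<Sum>s'\<in>UNIV. P_data D s a s' * VD n s')) - \<pi> s a * (rM s a + (\<Sum>s'\<in>UNIV. P s a s' * VM n s'))
            = \<pi> s a * x s a + \<pi> s a * (\<Sum>s'\<in>UNIV. P_data D s a s' * (VD n s' - VM n s'))"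
            unfolding x_def by (simp add: algebra_simps)
        qed
        also have "\<dots> = (\<Sum>a\<in>UNIV. \<pi> s a * x s a) +
          (\<Sum>a\<in>UNIV. \<pi> s a * (\<Sum>s'\<in>UNIV. P_data D s a s' * (VD n s' - VM n s')))"
          by (rule sum.distrib)
        finally show ?thesis .
      qed
      have xb: "\<bar>x s a\<bar> \<le> K" if "0 < d h s" "0 < \<pi> s a" for s a
      proof -
        have v: "0 < rho_sa H layer s0 (P_data D) \<pi> s a" using visit[OF hH that] .
        have r: "\<bar>rD s a - rM s a\<bar> \<le> eps_r" using hr v unfolding rD_def rM_def by blast
        have p: "(\<Sum>s'\<in>UNIV. \<bar>P_data D s a s' - P s a s'\<bar>) \<le> eps_P" using hP v by blast
        have "\<bar>\<Sum>s'\<in>UNIV. (P_data D s a s' - P s a s') * VM n s'\<bar> \<le>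
              (\<Sum>s'\<in>UNIV. \<bar>P_data D s a s' - P s a s'\<bar>) * (real n * r_max)"
          by (rule abs_sum_weighted) (use Vb rmax_nn in auto)
        also have "\<dots> \<le> eps_P * (real n * r_max)"
          using p rmax_nn by (simp add: mult_right_mono)
        finally have "\<bar>\<Sum>s'\<in>UNIV. (P_data D s a s' - P s a s') * VM n s'\<bar> \<le> eps_P * (real n * r_max)" .
        then show ?thesis using r unfolding x_def K_def by (simp add: abs_triangle_ineq order_trans algebra_simps)
      qed
      have Knn: "0 \<le> K" unfolding K_def using epsr_nn epsP_nn rmax_nn by simp
      have T1: "\<bar>\<Sum>s\<in>UNIV. d h s * (\<Sum>a\<in>UNIV. \<pi> s a * x s a)\<bar> \<le> K"
      proof -
        have "\<bar>\<Sum>s\<in>UNIV. d h s * (\<Sum>a\<in>UNIV. \<pi> s a * x s a)\<bar> \<le> (\<Sum>s\<in>UNIV. d h s) * K"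
        proof (rule abs_sum_weighted2)
          fix s show "0 \<le> d h s" by (rule dnn)
          assume ds: "d h s \<noteq> 0"
          then have dpos: "0 < d h s" using dnn[of h s] by simp
          have "\<bar>\<Sum>a\<in>UNIV. \<pi> s a * x s a\<bar> \<le> (\<Sum>a\<in>UNIV. \<pi> s a) * K"
          proof (rule abs_sum_weighted2)
            fix a show "0 \<le> \<pi> s a" using pinn by blast
            assume "\<pi> s a \<noteq> 0"
            moreover have "0 \<le> \<pi> s a" using pinn by blast
            ultimately have "0 < \<pi> s a" by linarith
            then show "\<bar>x s a\<bar> \<le> K" using xb dpos by blast
          qed
          then show "\<bar>\<Sum>a\<in>UNIV. \<pi> s a * x s a\<bar> \<le> K" using pisum by simp
        qed
        also have "\<dots> \<le> 1 * K" using dmass[of h] Knn by (rule mult_right_mono)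
        finally show ?thesis by simp
      qed
      have split: "(\<Sum>s\<in>UNIV. d h s * (VD (Suc n) s - VM (Suc n) s)) =
          (\<Sum>s\<in>UNIV. d h s * (\<Sum>a\<in>UNIV. \<pi> s a * x s a)) +
          (\<Sum>s'\<in>UNIV. d (Suc h) s' * (VD n s' - VM n s'))"
      proof -
        have "(\<Sum>s\<in>UNIV. d h s * (VD (Suc n) s - VM (Suc n) s)) =
          (\<Sum>s\<in>UNIV. d h s * (\<Sum>a\<in>UNIV. \<pi> s a * x s a) +
             d h s * (\<Sum>a\<in>UNIV. \<pi> s a * (\<Sum>s'\<in>UNIV. P_data D s a s' * (VD n s' - VM n s'))))"
          unfolding dec by (simp only: distrib_left)
        also have "\<dots> = (\<Sum>s\<in>UNIV. d h s * (\<Sum>a\<in>UNIV. \<pi> s a * x s a)) +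
          (\<Sum>s\<in>UNIV. d h s * (\<Sum>a\<in>UNIV. \<pi> s a * (\<Sum>s'\<in>UNIV. P_data D s a s' * (VD n s' - VM n s'))))"
          by (rule sum.distrib)
        also have "(\<Sum>s\<in>UNIV. d h s * (\<Sum>a\<in>UNIV. \<pi> s a * (\<Sum>s'\<in>UNIV. P_data D s a s' * (VD n s' - VM n s'))))
           = (\<Sum>s'\<in>UNIV. d (Suc h) s' * (VD n s' - VM n s'))"
          unfolding d_def by (rule dvis_flow)
        finally show ?thesis .
      qed
      have IH: "\<bar>\<Sum>s'\<in>UNIV. d (Suc h) s' * (VD n s' - VM n s')\<bar> \<le> C n"
        using Suc.IH hn by simp
      have "\<bar>\<Sum>s\<in>UNIV. d h s * (VD (Suc n) s - VM (Suc n) s)\<bar> \<le> K + C n"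
        unfolding split using T1 IH by (meson abs_triangle_ineq add_mono order_trans)
      also have "K + C n = C (Suc n)"
        unfolding K_def C_def by (simp add: field_simps)
      finally show "\<bar>\<Sum>s\<in>UNIV. d h s * (VD (Suc n) s - VM (Suc n) s)\<bar> \<le> C (Suc n)" .
    qed
  qed
  have "\<bar>\<Sum>s\<in>UNIV. d 0 s * (VD H s - VM H s)\<bar> \<le> C H" using key[of H] by simp
  moreover have "(\<Sum>s\<in>UNIV. d 0 s * (VD H s - VM H s)) = VD H s0 - VM H s0"
  proof -
    have "(\<Sum>s\<in>UNIV. d 0 s * (VD H s - VM H s)) = (\<Sum>s\<in>UNIV. if s = s0 then VD H s - VM H s else 0)"
      unfolding d_def by (rule sum.cong) auto
    then show ?thesis by simp
  qed
  ultimately show ?thesis unfolding J_def VD_def VM_def C_def by simp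
qed

end
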